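(* Let $S\subset\mathbb{R}^n$ and $U_0\subset\mathbb{R}^{n\times n}$ be polyhedra and let $A_\star\in U_0$. If one-step safe learning is possible, then it is possible with at most $n$ measurements (i.e., with $m\le n$ in the definition below).
   Context: System: $x_{t+1}=A_\star x_t$ with $A_\star$ unknown, $A_\star\in U_0$. Given measurements $(x_j,y_j)$, $j=1,\dots,k$, with $y_j=A_\star x_j$, let $U_k=\{A\in U_0\mid Ax_j=y_j,\ j=1,\dots,k\}$. One-step safe learning is possible if for some nonnegative integer $m$ one can sequentially choose vectors $x_k\in S$, $k=1,\dots,m$ (each choice may depend on previous observations), observing $y_k=A_\star x_k$ after each choice, such that (1) for $k=1,\dots,m$, $Ax_k\in S$ for all $A\in U_{k-1}$, and (2) $U_m$ is a singleton. *)

theory Defs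
  imports "HOL-Analysis.Analysis"
begin

text \<open>Measurements are a list xs = [x_1, ..., x_m] (0-based in the list).
  U_k = set of matrices in U0 consistent with the first k measurements,
  where the observations are y_j = Astar x_j.\<close>

definition consistent_set ::
  "(real^'n^'n) set \<Rightarrow> real^'n^'n \<Rightarrow> (real^'n) list \<Rightarrow> nat \<Rightarrow> (real^'n^'n) set" where
  "consistent_set U0 Astar xs k =
     {A \<in> U0. \<forall>j<k. A *v (xs ! j) = Astar *v (xs ! j)}"

definition safe_learning_sequence ::
  "(real^'n) set \<Rightarrow> (real^'n^'n) set \<Rightarrow> real^'n^'n \<Rightarrow> (real^'n) list \<Rightarrow> bool" where
  "safe_learning_sequence S U0 Astar xs \<longleftrightarrow>
     (\<forall>k<length xs. xs ! k \<in> S \<and>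
        (\<forall>A \<in> consistent_set U0 Astar xs k. A *v (xs ! k) \<in> S)) \<and>
     is_singleton (consistent_set U0 Astar xs (length xs))"

definition one_step_safe_learning_possible ::
  "(real^'n) set \<Rightarrow> (real^'n^'n) set \<Rightarrow> real^'n^'n \<Rightarrow> bool" where
  "one_step_safe_learning_possible S U0 Astar \<longleftrightarrow>
     (\<exists>xs. safe_learning_sequence S U0 Astar xs)"

end

theory Submission
  imports Defs
begin

lemma agree_span:
  fixes A B :: "real^'n^'n"
  assumes "x \<in> span T" "\<forall>t\<in>T. A *v t = B *v t"
  shows "A *v x = B *v x"
proof -
  have "span T \<subseteq> {v. (A - B) *v v = 0}"
    apply (rule span_minimal)
    using assms(2) apply (auto simp: matrix_vector_mult_diff_rdistrib)[1]
    unfolding subspace_def by (auto simp: matrix_vector_right_distrib matrix_vector_mult_scaleR)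
  with assms(1) have "(A - B) *v x = 0" by auto
  thus ?thesis by (simp add: matrix_vector_mult_diff_rdistrib)
qed

lemma remove_step:
  fixes xs :: "(real^'n) list"
  assumes safe: "safe_learning_sequence S U0 Astar xs"
    and k: "k < length xs" and sp: "xs ! k \<in> span (set (take k xs))"
  defines "ys \<equiv> take k xs @ drop (Suc k) xs"
  shows "safe_learning_sequence S U0 Astar ys"
proof -
  have len: "length ys = length xs - 1" using k by (simp add: ys_def)
  have ys1: "ys ! i = xs ! i" if "i < k" for i using that k
    by (simp add: ys_def nth_append)
  have ys2: "ys ! i = xs ! Suc i" if "k \<le> i" "i < length ys" for i using that k
    by (simp add: ys_def nth_append min_def)
  have c1: "consistent_set U0 Astar ys i = consistent_set U0 Astar xs i" if "i \<le> k" for i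
    using that ys1 unfolding consistent_set_def by auto
  have c2: "consistent_set U0 Astar ys i = consistent_set U0 Astar xs (Suc i)"
    if "k \<le> i" "i \<le> length ys" for i
  proof -
    have "(\<forall>j<i. A *v ys ! j = Astar *v ys ! j) \<longleftrightarrow> (\<forall>j<Suc i. A *v xs ! j = Astar *v xs ! j)"
      for A :: "real^'n^'n"
    proof
      assume H: "\<forall>j<i. A *v ys ! j = Astar *v ys ! j"
      have H1: "\<forall>j<k. A *v xs ! j = Astar *v xs ! j"
      proof (intro allI impI)
        fix j assume "j < k"
        then have "j < i" using that by simp
        then show "A *v xs ! j = Astar *v xs ! j" using H ys1[OF \<open>j < k\<close>] by metis
      qed
      have "\<forall>t\<in>set (take k xs). A *v t = Astar *v t"
        using H1 k by (auto simp: in_set_conv_nth)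
      hence Hk: "A *v xs ! k = Astar *v xs ! k" using agree_span[OF sp] by blast
      show "\<forall>j<Suc i. A *v xs ! j = Astar *v xs ! j"
      proof (intro allI impI)
        fix j assume j: "j < Suc i"
        show "A *v xs ! j = Astar *v xs ! j"
        proof (cases "j < k")
          case True then show ?thesis using H1 by auto
        next
          case False
          show ?thesis
          proof (cases "j = k")
            case True then show ?thesis using Hk by simp
          next
            case F2: False
            then obtain j' where "j = Suc j'" "k \<le> j'" "j' < i" using False j
              by (metis Suc_less_SucD linorder_neqE_nat not0_implies_Suc not_less0 not_less_eq_eq less_Suc_eq_le)
            then show ?thesis using H ys2[of j'] that by auto
          qed
        qed
      qed
    next
      assume H: "\<forall>j<Suc i. A *v xs ! j = Astar *v xs ! j"
      show "\<forall>j<i. A *v ys ! j = Astar *v ys ! j"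
      proof (intro allI impI)
        fix j assume j: "j < i"
        show "A *v ys ! j = Astar *v ys ! j"
        proof (cases "j < k")
          case True then show ?thesis using H ys1 that by auto
        next
          case False then show ?thesis using H ys2[of j] that j by auto
        qed
      qed
    qed
    thus ?thesis unfolding consistent_set_def by auto
  qed
  show ?thesis
    unfolding safe_learning_sequence_def
  proof (rule conjI, intro allI impI)
    fix i assume i: "i < length ys"
    show "ys ! i \<in> S \<and> (\<forall>A\<in>consistent_set U0 Astar ys i. A *v ys ! i \<in> S)"
    proof (cases "i < k")
      case True
      then show ?thesis using safe k c1[of i] ys1[of i]
        unfolding safe_learning_sequence_def by auto
    next
      case False
      then show ?thesis using safe i len c2[of i] ys2[of i]
        unfolding safe_learning_sequence_def by auto
    qed
  next
    have "consistent_set U0 Astar ys (length ys) = consistent_set U0 Astar xs (length xs)"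
    proof -
      have "Suc (length xs - 1) = length xs" using k by simp
      thus ?thesis using c2[of "length ys"] len k by simp
    qed
    thus "is_singleton (consistent_set U0 Astar ys (length ys))"
      using safe unfolding safe_learning_sequence_def by simp
  qed
qed

lemma dim_take:
  fixes xs :: "(real^'n) list"
  assumes "\<forall>k<length xs. xs ! k \<notin> span (set (take k xs))"
  shows "k \<le> length xs \<Longrightarrow> dim (set (take k xs)) = k"
proof (induction k)
  case 0 then show ?case by simp
next
  case (Suc k)
  have "take (Suc k) xs = take k xs @ [xs ! k]" using Suc.prems by (simp add: take_Suc_conv_app_nth)
  hence "set (take (Suc k) xs) = insert (xs ! k) (set (take k xs))" by simp
  then show ?case using Suc assms by (simp add: dim_insert)
qed

theorem corollary8:
  fixes S :: "(real^'n) set" and U0 :: "(real^'n^'n) set" and Astar :: "real^'n^'n"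
  assumes "polyhedron S" and "polyhedron U0" and "Astar \<in> U0"
    and "one_step_safe_learning_possible S U0 Astar"
  shows "\<exists>xs. length xs \<le> CARD('n) \<and> safe_learning_sequence S U0 Astar xs"
proof -
  have main: "\<And>xs. length xs = m \<Longrightarrow> safe_learning_sequence S U0 Astar xs \<Longrightarrow>
      \<exists>xs. length xs \<le> CARD('n) \<and> safe_learning_sequence S U0 Astar xs" for m
  proof (induction m rule: less_induct)
    case (less m xs)
    show ?case
    proof (cases "\<exists>k<length xs. xs ! k \<in> span (set (take k xs))")
      case True
      then obtain k where k: "k < length xs" "xs ! k \<in> span (set (take k xs))" by blast
      show ?thesis
        using less.IH[OF _ refl remove_step[OF less.prems(2) k]] k less.prems(1) by simp
    next
      case False
      hence "dim (set (take (length xs) xs)) = length xs" using dim_take[of xs "length xs"] by auto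
      hence "length xs \<le> DIM(real^'n)" using dim_subset_UNIV[of "set xs"] by simp
      thus ?thesis using less.prems by auto
    qed
  qed
  from assms(4) obtain xs where "safe_learning_sequence S U0 Astar xs"
    unfolding one_step_safe_learning_possible_def by blast
  thus ?thesis using main by blast
qed

end
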